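(* Consider a two-tier downlink network in $\mathbb{R}^2$ in which the tier-1 (macro) base stations form a homogeneous Poisson point process $\Phi_1$ of density $\lambda_1>0$ and the tier-2 (small cell) base stations form an independent homogeneous Poisson point process $\Phi_2$ of density $\lambda_2>0$, with tier-$k$ transmit power $P_k>0$ and path loss exponent $\alpha_k>0$. A typical user is at the origin and $D_k$ is the distance to the nearest point of $\Phi_k$. Let $B_1>B_2>0$ and define the events $u\in u_1\iff P_1D_1^{-\alpha_1}\ge P_2B_1D_2^{-\alpha_2}$; $u\in u_D\iff P_2B_1D_2^{-\alpha_2}>P_1D_1^{-\alpha_1}\ge P_2B_2D_2^{-\alpha_2}$; $u\in u_{\bar D}\iff P_2B_2D_2^{-\alpha_2}>P_1D_1^{-\alpha_1}$, with probabilities $A_l=\mathbb{P}(u\in u_l)$. A user in $u_1$ is served by its nearest tier-1 base station, and a user in $u_D$ or $u_{\bar D}$ by its nearest tier-2 base station. For $l\in\{1,D,\bar D\}$ let $G_l$ be the distance from the typical user to its serving base station conditioned on $u\in u_l$ (i.e. $G_1$ is $D_1$ conditioned on $u\in u_1$, and $G_D$, $G_{\bar D}$ are $D_2$ conditioned on $u\in u_D$, $u\in u_{\bar D}$ respectively). Then for $x>0$ the probability density functions are $$f_{G_1}(x)=\frac{2\pi\lambda_1}{A_1}x\exp\left(-\pi\lambda_1x^2-\pi\lambda_2\left(\frac{P_2B_1}{P_1}\right)^{2/\alpha_2}x^{2\alpha_1/\alpha_2}\right),$$ $$f_{G_{\bar D}}(x)=\frac{2\pi\lambda_2}{A_{\bar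 D}}x\exp\left(-\pi\lambda_1\left(\frac{P_1}{P_2B_2}\right)^{2/\alpha_1}x^{2\alpha_2/\alpha_1}-\pi\lambda_2x^2\right),$$ $$f_{G_D}(x)=\frac{2\pi\lambda_2}{A_D}x\left\{\exp\left(-\pi\lambda_1\left(\frac{P_1}{P_2B_1}\right)^{2/\alpha_1}x^{2\alpha_2/\alpha_1}-\pi\lambda_2x^2\right)-\exp\left(-\pi\lambda_1\left(\frac{P_1}{P_2B_2}\right)^{2/\alpha_1}x^{2\alpha_2/\alpha_1}-\pi\lambda_2x^2\right)\right\}.$$
   Context: $u_1$ = macro users, $u_D$ = users offloaded to small cells by extra cell range expansion, $u_{\bar D}$ = original small cell users; association is by maximum biased received power. *)

theory Defs
  imports "HOL-Probability.Probability"
begin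

definition pcount :: "(real^2) set \<Rightarrow> (real^2) set \<Rightarrow> nat" where
  "pcount S A = card (S \<inter> A)"

definition homogeneous_PPP :: "'w measure \<Rightarrow> real \<Rightarrow> ('w \<Rightarrow> (real^2) set) \<Rightarrow> bool" where
  "homogeneous_PPP M lam Phi \<longleftrightarrow>
     prob_space M \<and>
     (\<forall>\<omega>\<in>space M. \<forall>K. bounded K \<longrightarrow> finite (Phi \<omega> \<inter> K)) \<and>
     (\<forall>A. A \<in> sets lborel \<and> bounded A \<longrightarrow>
        (\<lambda>\<omega>. pcount (Phi \<omega>) A) \<in> measurable M (count_space UNIV) \<and>
        (\<forall>n. measure M {\<omega>\<in>space M. pcount (Phi \<omega>) A = n} =
              (lam * measure lborel A) ^ n / fact n * exp (- (lam * measure lborel A)))) \<and>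
     (\<forall>(I::nat set) A. finite I \<longrightarrow> (\<forall>i\<in>I. A i \<in> sets lborel \<and> bounded (A i)) \<longrightarrow>
        disjoint_family_on A I \<longrightarrow>
        prob_space.indep_vars M (\<lambda>_. count_space UNIV) (\<lambda>i \<omega>. pcount (Phi \<omega>) (A i)) I)"

definition indep_PP :: "'w measure \<Rightarrow> ('w \<Rightarrow> (real^2) set) \<Rightarrow> ('w \<Rightarrow> (real^2) set) \<Rightarrow> bool" where
  "indep_PP M Phi1 Phi2 \<longleftrightarrow>
     (\<forall>(I::nat set) (J::nat set) A B. finite I \<longrightarrow> finite J \<longrightarrow>
        (\<forall>i\<in>I. A i \<in> sets lborel \<and> bounded (A i)) \<longrightarrow>
        (\<forall>j\<in>J. B j \<in> sets lborel \<and> bounded (B j)) \<longrightarrow>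
        prob_space.indep_var M
          (PiM I (\<lambda>_. count_space UNIV)) (\<lambda>\<omega>. \<lambda>i\<in>I. pcount (Phi1 \<omega>) (A i))
          (PiM J (\<lambda>_. count_space UNIV)) (\<lambda>\<omega>. \<lambda>j\<in>J. pcount (Phi2 \<omega>) (B j)))"

definition nearest_dist :: "(real^2) set \<Rightarrow> real" where
  "nearest_dist S = infdist 0 S"

end

theory Submission imports Defs "HOL-Real_Asymp.Real_Asymp" begin

lemma cball_meas: "r \<ge> 0 \<Longrightarrow> measure lborel (cball (0::real^2) r) = pi * r^2"
  by (simp add: content_cball_conv_ball circle_area)

lemma nd_nonneg: "nearest_dist S \<ge> 0"
  by (simp add: nearest_dist_def infdist_nonneg)

lemma nd_gt_iff:
  assumes locfin: "\<And>K. bounded K \<Longrightarrow> finite (S \<inter> K)" and r: "r \<ge> 0"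
  shows "r < nearest_dist S \<longleftrightarrow> S \<noteq> {} \<and> S \<inter> cball 0 r = {}"
proof
  assume h: "r < nearest_dist S"
  show "S \<noteq> {} \<and> S \<inter> cball 0 r = {}"
  proof (intro conjI)
    show "S \<noteq> {}" using h r by (auto simp: nearest_dist_def infdist_def)
    show "S \<inter> cball 0 r = {}"
    proof (rule ccontr)
      assume "S \<inter> cball 0 r \<noteq> {}"
      then obtain p where p: "p \<in> S" "dist 0 p \<le> r" by auto
      have "infdist 0 S \<le> dist 0 p" using p(1) by (rule infdist_le)
      with p h show False by (simp add: nearest_dist_def)
    qed
  qed
next
  assume h: "S \<noteq> {} \<and> S \<inter> cball 0 r = {}"
  define F where "F = S \<inter> cball 0 (r+1)"
  have fF: "finite F" unfolding F_def by (rule locfin) simp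
  define d where "d = Min (insert (r+1) (norm ` F))"
  have fin: "finite (insert (r+1) (norm ` F))" using fF by simp
  have "\<forall>x\<in>insert (r+1) (norm ` F). r < x"
  proof (intro ballI)
    fix x assume "x \<in> insert (r+1) (norm ` F)"
    then consider "x = r + 1" | p where "p \<in> F" "x = norm p" by auto
    then show "r < x"
    proof cases
      case 2
      then have "p \<in> S" by (simp add: F_def)
      with h have "p \<notin> cball 0 r" by auto
      then show ?thesis using 2 by (simp add: dist_norm)
    qed simp
  qed
  then have rd: "r < d" unfolding d_def using Min_gr_iff[OF fin] by blast
  have dle: "d \<le> dist 0 p" if "p \<in> S" for p
  proof (cases "norm p \<le> r + 1")
    case True
    then have "p \<in> F" using that by (simp add: F_def dist_norm)
    then have "d \<le> norm p" unfolding d_def using fin by (intro Min_le) auto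
    then show ?thesis by (simp add: dist_norm)
  next
    case False
    have "d \<le> r + 1" unfolding d_def using fin by (intro Min_le) auto
    with False show ?thesis by (simp add: dist_norm)
  qed
  have "d \<le> infdist 0 S"
    using h dle by (simp add: infdist_notempty cINF_greatest)
  with rd show "r < nearest_dist S" by (simp add: nearest_dist_def)
qed

definition Gset :: "'w measure \<Rightarrow> ('w \<Rightarrow> (real^2) set) \<Rightarrow> real \<Rightarrow> 'w set" where
  "Gset M Phi r = {\<omega>\<in>space M. pcount (Phi \<omega>) (cball 0 r) = 0}"

definition Zset :: "'w measure \<Rightarrow> ('w \<Rightarrow> (real^2) set) \<Rightarrow> 'w set" where
  "Zset M Phi = (\<Inter>n::nat. Gset M Phi (real n))"

lemma ppp_prob: "homogeneous_PPP M lam Phi \<Longrightarrow> prob_space M"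
  by (simp add: homogeneous_PPP_def)

lemma ppp_locfin: "homogeneous_PPP M lam Phi \<Longrightarrow> \<omega> \<in> space M \<Longrightarrow> bounded K \<Longrightarrow> finite (Phi \<omega> \<inter> K)"
  by (simp add: homogeneous_PPP_def)

lemma Gset_sets:
  assumes ppp: "homogeneous_PPP M lam Phi"
  shows "Gset M Phi r \<in> sets M"
proof -
  have "(\<lambda>\<omega>. pcount (Phi \<omega>) (cball 0 r)) \<in> measurable M (count_space UNIV)"
    using ppp unfolding homogeneous_PPP_def by auto
  then have "(\<lambda>\<omega>. pcount (Phi \<omega>) (cball 0 r)) -` {0} \<inter> space M \<in> sets M"
    by (rule measurable_sets) simp
  moreover have "(\<lambda>\<omega>. pcount (Phi \<omega>) (cball 0 r)) -` {0} \<inter> space M = Gset M Phi r"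
    by (auto simp: Gset_def)
  ultimately show ?thesis by simp
qed

lemma Gset_prob:
  assumes ppp: "homogeneous_PPP M lam Phi" and r: "r \<ge> 0"
  shows "measure M (Gset M Phi r) = exp (- (pi * lam * r^2))"
proof -
  have cb: "cball (0::real^2) r \<in> sets lborel \<and> bounded (cball (0::real^2) r)" by simp
  have "\<forall>n. measure M {\<omega>\<in>space M. pcount (Phi \<omega>) (cball 0 r) = n} =
        (lam * measure lborel (cball (0::real^2) r)) ^ n / fact n * exp (- (lam * measure lborel (cball (0::real^2) r)))"
    using ppp cb unfolding homogeneous_PPP_def by blast
  then have "measure M {\<omega>\<in>space M. pcount (Phi \<omega>) (cball 0 r) = 0} =
        (lam * measure lborel (cball (0::real^2) r)) ^ 0 / fact 0 * exp (- (lam * measure lborel (cball (0::real^2) r)))"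
    by blast
  then show ?thesis using r by (simp add: Gset_def cball_meas mult_ac)
qed

lemma Gset_iff:
  assumes ppp: "homogeneous_PPP M lam Phi" and w: "\<omega> \<in> space M"
  shows "\<omega> \<in> Gset M Phi r \<longleftrightarrow> Phi \<omega> \<inter> cball 0 r = {}"
  using ppp_locfin[OF ppp w, of "cball 0 r"] w by (simp add: Gset_def pcount_def)

lemma Zset_sets: "homogeneous_PPP M lam Phi \<Longrightarrow> Zset M Phi \<in> sets M"
  unfolding Zset_def by (intro sets.countable_INT') (auto intro: Gset_sets)

lemma Zset_iff:
  assumes ppp: "homogeneous_PPP M lam Phi" and w: "\<omega> \<in> space M"
  shows "\<omega> \<in> Zset M Phi \<longleftrightarrow> Phi \<omega> = {}"
proof
  assume "\<omega> \<in> Zset M Phi"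
  then have h: "\<And>n::nat. Phi \<omega> \<inter> cball 0 (real n) = {}"
    using Gset_iff[OF ppp w] by (auto simp: Zset_def)
  show "Phi \<omega> = {}"
  proof (rule ccontr)
    assume "Phi \<omega> \<noteq> {}"
    then obtain p where p: "p \<in> Phi \<omega>" by auto
    obtain n :: nat where "norm p \<le> real n" using real_arch_simple by blast
    with p h[of n] show False by (auto simp: dist_norm)
  qed
next
  assume "Phi \<omega> = {}"
  then show "\<omega> \<in> Zset M Phi" using Gset_iff[OF ppp w] w by (auto simp: Zset_def)
qed

lemma Zset_null:
  assumes ppp: "homogeneous_PPP M lam Phi" and lam: "lam > 0"
  shows "Zset M Phi \<in> null_sets M"
proof -
  interpret prob_space M by (rule ppp_prob[OF ppp])
  let ?z = "measure M (Zset M Phi)"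
  have zs: "Zset M Phi \<in> sets M" by (rule Zset_sets[OF ppp])
  have c: "pi * lam > 0" using lam by simp
  have bnd: "?z * (pi * lam) * real n \<le> 1" if n: "n \<ge> 1" for n :: nat
  proof -
    have "?z \<le> measure M (Gset M Phi (real n))"
      using zs Gset_sets[OF ppp] by (intro finite_measure_mono) (auto simp: Zset_def)
    also have "\<dots> = exp (- (pi * lam * (real n)^2))" by (rule Gset_prob[OF ppp]) simp
    also have "\<dots> = 1 / exp (pi * lam * (real n)^2)" by (simp add: exp_minus field_simps)
    also have "\<dots> \<le> 1 / (pi * lam * real n)"
    proof (rule divide_left_mono)
      have "pi * lam * real n \<le> pi * lam * (real n)^2"
        using c n by (intro mult_left_mono) (auto simp: power2_eq_square)
      also have "\<dots> \<le> 1 + pi * lam * (real n)^2" by simp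
      also have "\<dots> \<le> exp (pi * lam * (real n)^2)" by (rule exp_ge_add_one_self)
      finally show "pi * lam * real n \<le> exp (pi * lam * (real n)^2)" .
      show "0 < exp (pi * lam * (real n)^2) * (pi * lam * real n)" using c n by simp
    qed simp
    finally have "?z \<le> 1 / (pi * lam * real n)" .
    moreover have "0 < pi * lam * real n" using c n by simp
    ultimately have "?z * (pi * lam * real n) \<le> 1" by (simp add: le_divide_eq)
    then show ?thesis by (simp add: mult_ac)
  qed
  have "?z = 0"
  proof (rule ccontr)
    assume "?z \<noteq> 0"
    then have zp: "?z > 0" using measure_nonneg[of M "Zset M Phi"] by linarith
    obtain n :: nat where n: "1 / (?z * (pi * lam)) < real n" using reals_Archimedean2 by blast
    have "0 < real n" using n zp c by (smt (verit) divide_pos_pos mult_pos_pos)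
    then have "n \<ge> 1" by simp
    from bnd[OF this] have "?z * (pi * lam) * real n \<le> 1" .
    moreover have "1 < ?z * (pi * lam) * real n"
    proof -
      have pz: "0 < ?z * (pi * lam)" using zp c by simp
      from n have "1 < real n * (?z * (pi * lam))" using pz by (simp add: divide_less_eq)
      then show ?thesis by (simp add: mult_ac)
    qed
    ultimately show False by simp
  qed
  then show ?thesis using zs by (simp add: emeasure_eq_measure null_sets_def)
qed

lemma nd_gt_set:
  assumes ppp: "homogeneous_PPP M lam Phi"
  shows "{\<omega>\<in>space M. a < nearest_dist (Phi \<omega>)} = (if a < 0 then space M else Gset M Phi a - Zset M Phi)"
proof (cases "a < 0")
  case True
  then show ?thesis using nd_nonneg by (auto intro: less_le_trans)
next
  case False
  have "a < nearest_dist (Phi \<omega>) \<longleftrightarrow> \<omega> \<in> Gset M Phi a - Zset M Phi" if w: "\<omega> \<in> space M" for \<omega>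
    using nd_gt_iff[of "Phi \<omega>" a] ppp_locfin[OF ppp w] False Gset_iff[OF ppp w] Zset_iff[OF ppp w] by auto
  then show ?thesis using False by (auto simp: Gset_def)
qed

lemma nd_meas:
  assumes ppp: "homogeneous_PPP M lam Phi"
  shows "(\<lambda>\<omega>. nearest_dist (Phi \<omega>)) \<in> borel_measurable M"
  unfolding borel_measurable_iff_greater
  using nd_gt_set[OF ppp] Gset_sets[OF ppp] Zset_sets[OF ppp] by auto

lemma nd_tail:
  assumes ppp: "homogeneous_PPP M lam Phi" and lam: "lam > 0" and a: "a \<ge> 0"
  shows "measure M {\<omega>\<in>space M. a < nearest_dist (Phi \<omega>)} = exp (- (pi * lam * a^2))"
  using nd_gt_set[OF ppp, of a] a measure_Diff_null_set[OF Gset_sets[OF ppp] Zset_null[OF ppp lam]]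
    Gset_prob[OF ppp a] by simp

definition fden :: "real \<Rightarrow> real \<Rightarrow> real" where
  "fden lam x = indicator {0<..} x * (2 * pi * lam * x * exp (- (pi * lam * x^2)))"

definition mu :: "real \<Rightarrow> real measure" where
  "mu lam = density lborel (\<lambda>x. ennreal (fden lam x))"

lemma fden_meas[measurable]: "(\<lambda>x. ennreal (fden lam x)) \<in> borel_measurable borel"
  unfolding fden_def by measurable

lemma sets_mu[simp, measurable_cong]: "sets (mu lam) = sets borel"
  by (simp add: mu_def)

lemma space_mu[simp]: "space (mu lam) = UNIV"
  by (simp add: mu_def)

lemma mu_atLeast:
  assumes lam: "lam > 0" and t: "t \<ge> 0"
  shows "emeasure (mu lam) {t..} = ennreal (exp (- (pi * lam * t^2)))"
proof -
  let ?g = "\<lambda>x::real. 2 * pi * lam * x * exp (- (pi * lam * x^2))"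
  have "emeasure (mu lam) {t..} = (\<integral>\<^sup>+x. ennreal (fden lam x) * indicator {t..} x \<partial>lborel)"
    unfolding mu_def by (rule emeasure_density) auto
  also have "\<dots> = (\<integral>\<^sup>+x. ennreal (?g x) * indicator {t..} x \<partial>lborel)"
    using t by (intro nn_integral_cong) (case_tac "x = 0", auto simp: fden_def indicator_def)
  also have "\<dots> = 0 - (- exp (- (pi * lam * t^2)))"
  proof (rule nn_integral_FTC_atLeast)
    show "?g \<in> borel_measurable borel" by measurable
    show "DERIV (\<lambda>x. - exp (- (pi * lam * x^2))) x :> ?g x" for x
      by (rule derivative_eq_intros refl | simp)+
    show "0 \<le> ?g x" if "t \<le> x" for x using that t lam by simp
    show "((\<lambda>x. - exp (- (pi * lam * x^2))) \<longlongrightarrow> 0) at_top" using lam by real_asymp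
  qed
  finally show ?thesis by simp
qed

lemma mu_single: "emeasure (mu lam) {t} = 0"
proof -
  have "emeasure (mu lam) {t} = (\<integral>\<^sup>+x. ennreal (fden lam x) * indicator {t} x \<partial>lborel)"
    unfolding mu_def by (rule emeasure_density) auto
  also have "\<dots> = (\<integral>\<^sup>+(x::real). 0 \<partial>lborel)"
  proof (rule nn_integral_cong_AE)
    show "AE x in lborel. ennreal (fden lam x) * indicator {t} x = 0"
      using AE_lborel_singleton[of t] by eventually_elim simp
  qed
  finally show ?thesis by simp
qed

lemma mu_greater:
  assumes lam: "lam > 0" and t: "t \<ge> 0"
  shows "emeasure (mu lam) {t<..} = ennreal (exp (- (pi * lam * t^2)))"
proof -
  have "{t..} = {t<..} \<union> {t}" by auto
  then have "emeasure (mu lam) {t..} = emeasure (mu lam) {t<..} + emeasure (mu lam) {t}"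
    by (simp add: plus_emeasure)
  then show ?thesis using mu_atLeast[OF lam t] mu_single by simp
qed

lemma mu_restrict:
  assumes A: "A \<in> sets borel"
  shows "emeasure (mu lam) A = emeasure (mu lam) (A \<inter> {0<..})"
proof -
  have "emeasure (mu lam) A = (\<integral>\<^sup>+x. ennreal (fden lam x) * indicator A x \<partial>lborel)"
    unfolding mu_def using A by (intro emeasure_density) auto
  also have "\<dots> = (\<integral>\<^sup>+x. ennreal (fden lam x) * indicator (A \<inter> {0<..}) x \<partial>lborel)"
    by (intro nn_integral_cong) (auto simp: fden_def indicator_def)
  also have "\<dots> = emeasure (mu lam) (A \<inter> {0<..})"
    unfolding mu_def using A by (intro emeasure_density[symmetric]) auto
  finally show ?thesis .
qed

lemma mu_prob:
  assumes lam: "lam > 0"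
  shows "prob_space (mu lam)"
proof (rule prob_spaceI)
  have "emeasure (mu lam) UNIV = emeasure (mu lam) (UNIV \<inter> {0<..})"
    by (rule mu_restrict) simp
  also have "\<dots> = 1" using mu_greater[OF lam, of 0] by simp
  finally show "emeasure (mu lam) (space (mu lam)) = 1" by simp
qed

lemma mu_tail:
  assumes lam: "lam > 0"
  shows "measure (mu lam) {a<..} = (if a < 0 then 1 else exp (- (pi * lam * a^2)))"
proof -
  interpret P: prob_space "mu lam" by (rule mu_prob[OF lam])
  show ?thesis
  proof (cases "a < 0")
    case True
    have "emeasure (mu lam) {a<..} = emeasure (mu lam) ({a<..} \<inter> {0<..})"
      by (rule mu_restrict) simp
    also have "{a<..} \<inter> {0<..} = {0<..}" using True by auto
    also have "emeasure (mu lam) {0<..} = 1" using mu_greater[OF lam, of 0] by simp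
    finally show ?thesis using True by (simp add: P.emeasure_eq_measure)
  next
    case False
    then show ?thesis using mu_greater[OF lam, of a] by (simp add: P.emeasure_eq_measure)
  qed
qed

lemma mu_distr:
  assumes ppp: "homogeneous_PPP M lam Phi" and lam: "lam > 0"
  shows "distr M borel (\<lambda>\<omega>. nearest_dist (Phi \<omega>)) = mu lam"
proof -
  interpret prob_space M by (rule ppp_prob[OF ppp])
  interpret P: prob_space "mu lam" by (rule mu_prob[OF lam])
  let ?D = "\<lambda>\<omega>. nearest_dist (Phi \<omega>)"
  have Dm: "?D \<in> borel_measurable M" by (rule nd_meas[OF ppp])
  have tail: "measure M {\<omega>\<in>space M. a < ?D \<omega>} = measure (mu lam) {a<..}" for a
  proof (cases "a < 0")
    case True
    then show ?thesis using nd_gt_set[OF ppp, of a] mu_tail[OF lam, of a] by (simp add: prob_space)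
  next
    case False
    then show ?thesis using nd_tail[OF ppp lam, of a] mu_tail[OF lam, of a] by simp
  qed
  show ?thesis
  proof (rule cdf_unique)
    show "real_distribution (distr M borel ?D)" using Dm by simp
    show "real_distribution (mu lam)" unfolding real_distribution_def real_distribution_axioms_def
      using P.prob_space_axioms by simp
    show "cdf (distr M borel ?D) = cdf (mu lam)"
    proof
      fix x
      have ev: "{\<omega>\<in>space M. x < ?D \<omega>} \<in> events" using Dm by measurable
      have "cdf (distr M borel ?D) x = measure M (?D -` {..x} \<inter> space M)"
        unfolding cdf_def using Dm by (simp add: measure_distr)
      also have "?D -` {..x} \<inter> space M = space M - {\<omega>\<in>space M. x < ?D \<omega>}" by auto
      also have "measure M \<dots> = 1 - measure M {\<omega>\<in>space M. x < ?D \<omega>}" by (rule prob_compl[OF ev])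
      also have "\<dots> = 1 - measure (mu lam) {x<..}" by (simp add: tail)
      also have "\<dots> = measure (mu lam) (space (mu lam) - {x<..})" by (rule P.prob_compl[symmetric]) simp
      also have "space (mu lam) - {x<..} = {..x}" by auto
      finally show "cdf (distr M borel ?D) x = cdf (mu lam) x" by (simp add: cdf_def)
    qed
  qed
qed

lemma indep_G:
  assumes ppp1: "homogeneous_PPP M lam1 Phi1" and ppp2: "homogeneous_PPP M lam2 Phi2"
    and indep: "indep_PP M Phi1 Phi2"
  shows "measure M (Gset M Phi1 r \<inter> Gset M Phi2 s) = measure M (Gset M Phi1 r) * measure M (Gset M Phi2 s)"
proof -
  interpret prob_space M by (rule ppp_prob[OF ppp1])
  let ?K = "PiM {0::nat} (\<lambda>_. count_space (UNIV::nat set))"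
  let ?X1 = "\<lambda>\<omega>. \<lambda>i\<in>{0::nat}. pcount (Phi1 \<omega>) ((\<lambda>_. cball 0 r) i)"
  let ?X2 = "\<lambda>\<omega>. \<lambda>j\<in>{0::nat}. pcount (Phi2 \<omega>) ((\<lambda>_. cball 0 s) j)"
  have iv: "indep_var ?K ?X1 ?K ?X2"
    using indep unfolding indep_PP_def
    by (erule_tac x="{0}" in allE, erule_tac x="{0}" in allE, erule_tac x="\<lambda>_. cball 0 r" in allE,
        erule_tac x="\<lambda>_. cball 0 s" in allE) simp
  define C where "C = (\<lambda>f. f 0) -` {0::nat} \<inter> space ?K"
  have C: "C \<in> sets ?K" unfolding C_def
    by (rule measurable_sets[OF measurable_component_singleton]) auto
  have sp: "space ?K = PiE {0} (\<lambda>_. UNIV)" by (simp add: space_PiM)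
  have in1: "?X1 \<omega> \<in> space ?K" for \<omega>
    unfolding sp by (simp add: PiE_def extensional_def)
  have in2: "?X2 \<omega> \<in> space ?K" for \<omega>
    unfolding sp by (simp add: PiE_def extensional_def)
  have e1: "?X1 -` C \<inter> space M = Gset M Phi1 r"
    using in1 unfolding Gset_def C_def by (auto simp del: space_PiM)
  have e2: "?X2 -` C \<inter> space M = Gset M Phi2 s"
    using in2 unfolding Gset_def C_def by (auto simp del: space_PiM)
  have e3: "(\<lambda>x. (?X1 x, ?X2 x)) -` (C \<times> C) \<inter> space M = Gset M Phi1 r \<inter> Gset M Phi2 s"
    using e1 e2 by blast
  show ?thesis using indep_varD[OF iv C C] e1 e2 e3 by simp
qed

lemma nd_indep:
  assumes ppp1: "homogeneous_PPP M lam1 Phi1" and ppp2: "homogeneous_PPP M lam2 Phi2"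
    and indep: "indep_PP M Phi1 Phi2" and lam: "lam1 > 0" "lam2 > 0"
  shows "prob_space.indep_var M borel (\<lambda>\<omega>. nearest_dist (Phi1 \<omega>)) borel (\<lambda>\<omega>. nearest_dist (Phi2 \<omega>))"
proof -
  interpret prob_space M by (rule ppp_prob[OF ppp1])
  let ?D1 = "\<lambda>\<omega>. nearest_dist (Phi1 \<omega>)" and ?D2 = "\<lambda>\<omega>. nearest_dist (Phi2 \<omega>)"
  have D1m: "?D1 \<in> borel_measurable M" by (rule nd_meas[OF ppp1])
  have D2m: "?D2 \<in> borel_measurable M" by (rule nd_meas[OF ppp2])
  define G1 where "G1 = range (\<lambda>a. {\<omega>\<in>space M. a < ?D1 \<omega>})"
  define G2 where "G2 = range (\<lambda>a. {\<omega>\<in>space M. a < ?D2 \<omega>})"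
  have gen: "{X -` A \<inter> space M |A. A \<in> sets borel} = sigma_sets (space M) (range (\<lambda>a. {\<omega>\<in>space M. a < X \<omega>}))"
    if Xm: "X \<in> borel_measurable M" for X :: "'a \<Rightarrow> real"
  proof -
    have sb: "sets (borel :: real measure) = sigma_sets UNIV (range greaterThan)"
      by (subst borel_Ioi) simp
    have "{X -` A \<inter> space M |A. A \<in> sets borel} = sigma_sets (space M) {X -` A \<inter> space M |A. A \<in> range greaterThan}"
      unfolding sb by (rule sigma_sets_vimage_commute) simp
    also have "{X -` A \<inter> space M |A. A \<in> range greaterThan} = range (\<lambda>a. {\<omega>\<in>space M. a < X \<omega>})"
    proof (intro set_eqI iffI)
      fix S assume "S \<in> {X -` A \<inter> space M |A. A \<in> range greaterThan}"
      then obtain a where "S = X -` {a<..} \<inter> space M" by auto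
      then show "S \<in> range (\<lambda>a. {\<omega>\<in>space M. a < X \<omega>})"
        by (intro image_eqI[where x=a]) auto
    next
      fix S assume "S \<in> range (\<lambda>a. {\<omega>\<in>space M. a < X \<omega>})"
      then obtain a where "S = {\<omega>\<in>space M. a < X \<omega>}" by auto
      then have "S = X -` {a<..} \<inter> space M \<and> {a<..} \<in> range greaterThan" by auto
      then show "S \<in> {X -` A \<inter> space M |A. A \<in> range greaterThan}" by blast
    qed
    finally show ?thesis .
  qed
  have ss: "sigma_sets (space M) {X -` A \<inter> space M |A. A \<in> sets borel} = sigma_sets (space M) (range (\<lambda>a. {\<omega>\<in>space M. a < X \<omega>}))"
    if Xm: "X \<in> borel_measurable M" for X :: "'a \<Rightarrow> real"
    unfolding gen[OF Xm] by (rule sigma_sets_sigma_sets_eq) auto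
  have IS: "Int_stable (range (\<lambda>a. {\<omega>\<in>space M. a < X \<omega>}))" for X :: "'a \<Rightarrow> real"
  proof (rule Int_stableI)
    fix A B assume "A \<in> range (\<lambda>a. {\<omega>\<in>space M. a < X \<omega>})" "B \<in> range (\<lambda>a. {\<omega>\<in>space M. a < X \<omega>})"
    then obtain a b where "A = {\<omega>\<in>space M. a < X \<omega>}" "B = {\<omega>\<in>space M. b < X \<omega>}" by auto
    then show "A \<inter> B \<in> range (\<lambda>a. {\<omega>\<in>space M. a < X \<omega>})"
      by (intro image_eqI[where x="max a b"]) auto
  qed
  have prod: "prob ({\<omega>\<in>space M. a < ?D1 \<omega>} \<inter> {\<omega>\<in>space M. b < ?D2 \<omega>}) =
     prob {\<omega>\<in>space M. a < ?D1 \<omega>} * prob {\<omega>\<in>space M. b < ?D2 \<omega>}" for a b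
  proof (cases "a < 0 \<or> b < 0")
    case True
    then show ?thesis
    proof
      assume "a < 0"
      then have e: "{\<omega>\<in>space M. a < ?D1 \<omega>} = space M" using nd_gt_set[OF ppp1, of a] by simp
      have "space M \<inter> {\<omega>\<in>space M. b < ?D2 \<omega>} = {\<omega>\<in>space M. b < ?D2 \<omega>}" by auto
      then show ?thesis unfolding e by (simp add: prob_space)
    next
      assume "b < 0"
      then have e: "{\<omega>\<in>space M. b < ?D2 \<omega>} = space M" using nd_gt_set[OF ppp2, of b] by simp
      have "{\<omega>\<in>space M. a < ?D1 \<omega>} \<inter> space M = {\<omega>\<in>space M. a < ?D1 \<omega>}" by auto
      then show ?thesis unfolding e by (simp add: prob_space)
    qed
  next
    case False
    have N: "Zset M Phi1 \<union> Zset M Phi2 \<in> null_sets M"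
      using Zset_null[OF ppp1 lam(1)] Zset_null[OF ppp2 lam(2)] by (rule null_sets.Un)
    have "{\<omega>\<in>space M. a < ?D1 \<omega>} \<inter> {\<omega>\<in>space M. b < ?D2 \<omega>} =
        (Gset M Phi1 a \<inter> Gset M Phi2 b) - (Zset M Phi1 \<union> Zset M Phi2)"
      using False nd_gt_set[OF ppp1, of a] nd_gt_set[OF ppp2, of b] by auto
    then have "prob ({\<omega>\<in>space M. a < ?D1 \<omega>} \<inter> {\<omega>\<in>space M. b < ?D2 \<omega>}) =
       prob (Gset M Phi1 a \<inter> Gset M Phi2 b)"
      using measure_Diff_null_set[OF _ N] Gset_sets[OF ppp1] Gset_sets[OF ppp2] by simp
    also have "\<dots> = prob (Gset M Phi1 a) * prob (Gset M Phi2 b)" by (rule indep_G[OF ppp1 ppp2 indep])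
    finally show ?thesis
      using False nd_tail[OF ppp1 lam(1), of a] nd_tail[OF ppp2 lam(2), of b]
        Gset_prob[OF ppp1, of a] Gset_prob[OF ppp2, of b] by simp
  qed
  have "indep_set G1 G2"
    unfolding indep_sets2_eq G1_def G2_def using prod D1m D2m by (auto)
  then have "indep_set (sigma_sets (space M) G1) (sigma_sets (space M) G2)"
    by (intro indep_set_sigma_sets) (auto simp: G1_def G2_def IS)
  then show ?thesis
    unfolding indep_var_eq using D1m D2m by (simp add: ss G1_def G2_def)
qed

lemma joint_distr:
  assumes ppp1: "homogeneous_PPP M lam1 Phi1" and ppp2: "homogeneous_PPP M lam2 Phi2"
    and indep: "indep_PP M Phi1 Phi2" and lam: "lam1 > 0" "lam2 > 0"
  shows "distr M (borel \<Otimes>\<^sub>M borel) (\<lambda>\<omega>. (nearest_dist (Phi1 \<omega>), nearest_dist (Phi2 \<omega>))) = mu lam1 \<Otimes>\<^sub>M mu lam2"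
proof -
  interpret prob_space M by (rule ppp_prob[OF ppp1])
  show ?thesis
    using nd_indep[OF ppp1 ppp2 indep lam] unfolding indep_var_distribution_eq
    by (simp add: mu_distr[OF ppp1 lam(1)] mu_distr[OF ppp2 lam(2)])
qed


lemma powr_le_iff_pos: "0 < a \<Longrightarrow> 0 < u \<Longrightarrow> 0 < v \<Longrightarrow> (u powr a \<le> v powr a) = (u \<le> (v::real))"
  by (meson not_le powr_less_mono2 powr_mono2 less_imp_le)

lemma powr_less_iff_pos: "0 < a \<Longrightarrow> 0 < u \<Longrightarrow> 0 < v \<Longrightarrow> (u powr a < v powr a) = (u < (v::real))"
  by (meson not_le powr_less_mono2 powr_mono2 less_imp_le)

lemma thr_le:
  fixes c L a x :: real
  assumes "0 < c" "0 < L" "0 < a" "0 < x"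
  shows "(L \<le> c * x powr (-a)) \<longleftrightarrow> (x \<le> (c/L) powr (1/a))"
proof -
  have w: "((c/L) powr (1/a)) powr a = c/L" using assms by (simp add: powr_powr)
  have xa: "0 < x powr a" using assms by simp
  have "x \<le> (c/L) powr (1/a) \<longleftrightarrow> x powr a \<le> c/L"
    using powr_le_iff_pos[of a x "(c/L) powr (1/a)"] assms w by simp
  also have "\<dots> \<longleftrightarrow> L * x powr a \<le> c" using assms by (simp add: le_divide_eq mult.commute)
  also have "\<dots> \<longleftrightarrow> L \<le> c * x powr (-a)" using assms xa by (simp add: powr_minus_divide le_divide_eq)
  finally show ?thesis by simp
qed

lemma thr_less:
  fixes c L a x :: real
  assumes "0 < c" "0 < L" "0 < a" "0 < x"
  shows "(L < c * x powr (-a)) \<longleftrightarrow> (x < (c/L) powr (1/a))"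
proof -
  have w: "((c/L) powr (1/a)) powr a = c/L" using assms by (simp add: powr_powr)
  have xa: "0 < x powr a" using assms by simp
  have "x < (c/L) powr (1/a) \<longleftrightarrow> x powr a < c/L"
    using powr_less_iff_pos[of a x "(c/L) powr (1/a)"] assms w by simp
  also have "\<dots> \<longleftrightarrow> L * x powr a < c" using assms by (simp add: less_divide_eq mult.commute)
  also have "\<dots> \<longleftrightarrow> L < c * x powr (-a)" using assms xa by (simp add: powr_minus_divide less_divide_eq)
  finally show ?thesis by simp
qed

lemma sq_powr:
  fixes c K a b x :: real
  assumes "0 < c" "0 < K" "0 < a" "0 < x"
  shows "((c / (K * x powr (-b))) powr (1/a))^2 = (c/K) powr (2/a) * x powr (2*b/a)"
proof -
  have e: "c / (K * x powr (-b)) = (c/K) * x powr b" using assms by (simp add: powr_minus field_simps)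
  have p: "0 < (c/K) * x powr b" using assms by simp
  have "((c / (K * x powr (-b))) powr (1/a))^2 = (((c/K) * x powr b) powr (1/a)) powr 2"
    unfolding e using p by (subst powr_numeral) (auto simp del: powr_numeral)
  also have "\<dots> = ((c/K) * x powr b) powr (2/a)" by (simp add: powr_powr)
  also have "\<dots> = (c/K) powr (2/a) * (x powr b) powr (2/a)"
    using assms by (subst powr_mult) auto
  also have "\<dots> = (c/K) powr (2/a) * x powr (2*b/a)" by (simp add: powr_powr mult.commute)
  finally show ?thesis .
qed

lemma inner_ge:
  fixes c L a lam :: real
  assumes lam: "lam > 0" and c: "0 < c" and L: "0 < L" and a: "0 < a"
  shows "emeasure (mu lam) {y. c * y powr (-a) \<le> L} = ennreal (exp (- (pi * lam * ((c/L) powr (1/a))^2)))"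
proof -
  let ?t = "(c/L) powr (1/a)"
  have tp: "0 < ?t" using c L by simp
  have "emeasure (mu lam) {y. c * y powr (-a) \<le> L} = emeasure (mu lam) ({y. c * y powr (-a) \<le> L} \<inter> {0<..})"
    by (rule mu_restrict) measurable
  also have "{y. c * y powr (-a) \<le> L} \<inter> {0<..} = {?t..}"
  proof (intro set_eqI iffI)
    fix y assume "y \<in> {y. c * y powr (-a) \<le> L} \<inter> {0<..}"
    then show "y \<in> {?t..}" using thr_less[of c L a y] c L a by (auto simp: not_less[symmetric])
  next
    fix y assume "y \<in> {?t..}"
    then have y2: "?t \<le> y" by simp
    have y: "0 < y" "?t \<le> y" using tp y2 by linarith+
    then show "y \<in> {y. c * y powr (-a) \<le> L} \<inter> {0<..}" using thr_less[of c L a y] c L a by auto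
  qed
  also have "emeasure (mu lam) {?t..} = ennreal (exp (- (pi * lam * ?t^2)))"
    using mu_atLeast[OF lam] tp by simp
  finally show ?thesis .
qed

lemma inner_gt:
  fixes c L a lam :: real
  assumes lam: "lam > 0" and c: "0 < c" and L: "0 < L" and a: "0 < a"
  shows "emeasure (mu lam) {x. c * x powr (-a) < L} = ennreal (exp (- (pi * lam * ((c/L) powr (1/a))^2)))"
proof -
  let ?t = "(c/L) powr (1/a)"
  have tp: "0 < ?t" using c L by simp
  have "emeasure (mu lam) {x. c * x powr (-a) < L} = emeasure (mu lam) ({x. c * x powr (-a) < L} \<inter> {0<..})"
    by (rule mu_restrict) measurable
  also have "{x. c * x powr (-a) < L} \<inter> {0<..} = {?t<..}"
  proof (intro set_eqI iffI)
    fix y assume "y \<in> {x. c * x powr (-a) < L} \<inter> {0<..}"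
    then show "y \<in> {?t<..}" using thr_le[of c L a y] c L a by (auto simp: not_le[symmetric])
  next
    fix y assume "y \<in> {?t<..}"
    then have y2: "?t < y" by simp
    have y: "0 < y" "?t < y" using tp y2 by linarith+
    then show "y \<in> {x. c * x powr (-a) < L} \<inter> {0<..}" using thr_le[of c L a y] c L a by auto
  qed
  also have "emeasure (mu lam) {?t<..} = ennreal (exp (- (pi * lam * ?t^2)))"
    using mu_greater[OF lam] tp by simp
  finally show ?thesis .
qed

lemma inner_between:
  fixes c L1 L2 a lam :: real
  assumes lam: "lam > 0" and c: "0 < c" and L2: "0 < L2" and L12: "L2 < L1" and a: "0 < a"
  shows "emeasure (mu lam) {x. c * x powr (-a) < L1 \<and> L2 \<le> c * x powr (-a)} =
    ennreal (exp (- (pi * lam * ((c/L1) powr (1/a))^2)) - exp (- (pi * lam * ((c/L2) powr (1/a))^2)))"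
proof -
  interpret P: prob_space "mu lam" by (rule mu_prob[OF lam])
  let ?s1 = "(c/L1) powr (1/a)" and ?s2 = "(c/L2) powr (1/a)"
  have L1: "0 < L1" using L2 L12 by simp
  have s1p: "0 < ?s1" using c L1 by simp
  have s12: "?s1 \<le> ?s2" using c L1 L2 L12 a
    by (intro powr_mono2) (auto simp: divide_left_mono)
  have "emeasure (mu lam) {x. c * x powr (-a) < L1 \<and> L2 \<le> c * x powr (-a)} =
     emeasure (mu lam) ({x. c * x powr (-a) < L1 \<and> L2 \<le> c * x powr (-a)} \<inter> {0<..})"
    by (rule mu_restrict) measurable
  also have "{x. c * x powr (-a) < L1 \<and> L2 \<le> c * x powr (-a)} \<inter> {0<..} = {?s1<..} - {?s2<..}"
  proof (intro set_eqI iffI)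
    fix y assume "y \<in> {x. c * x powr (-a) < L1 \<and> L2 \<le> c * x powr (-a)} \<inter> {0<..}"
    then show "y \<in> {?s1<..} - {?s2<..}" using thr_le[of c L1 a y] thr_le[of c L2 a y] c L1 L2 a
      by (auto simp: not_le[symmetric])
  next
    fix y assume "y \<in> {?s1<..} - {?s2<..}"
    then have y2: "?s1 < y" "y \<le> ?s2" by auto
    have y: "0 < y" "?s1 < y" "y \<le> ?s2" using s1p y2 by linarith+
    then show "y \<in> {x. c * x powr (-a) < L1 \<and> L2 \<le> c * x powr (-a)} \<inter> {0<..}"
      using thr_le[of c L1 a y] thr_le[of c L2 a y] c L1 L2 a by auto
  qed
  also have "emeasure (mu lam) ({?s1<..} - {?s2<..}) = emeasure (mu lam) {?s1<..} - emeasure (mu lam) {?s2<..}"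
    using s12 by (intro emeasure_Diff) auto
  also have "\<dots> = ennreal (exp (- (pi * lam * ?s1^2))) - ennreal (exp (- (pi * lam * ?s2^2)))"
    using mu_greater[OF lam] s1p s12 by simp
  also have "\<dots> = ennreal (exp (- (pi * lam * ?s1^2)) - exp (- (pi * lam * ?s2^2)))"
    by (rule ennreal_minus) simp
  finally show ?thesis .
qed

lemma distr_uniform:
  fixes X :: "'a \<Rightarrow> real" and h g :: "real \<Rightarrow> real"
  assumes P: "prob_space M" and Xm: "X \<in> borel_measurable M" and E: "E \<in> sets M"
    and hm: "h \<in> borel_measurable borel" and h0: "\<And>x. 0 \<le> h x"
    and key: "\<And>A. A \<in> sets borel \<Longrightarrow> emeasure M ({\<omega>\<in>space M. X \<omega> \<in> A} \<inter> E) = (\<integral>\<^sup>+x. ennreal (h x) * indicator A x \<partial>lborel)"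
    and g: "\<And>x. g x = h x / measure M E"
  shows "distributed (uniform_measure M E) lborel X (\<lambda>x. ennreal (g x))"
proof -
  interpret prob_space M by (rule P)
  let ?m = "measure M E"
  have mc: "measurable (uniform_measure M E) lborel = measurable M borel"
    by (rule measurable_cong_sets) simp_all
  have XU: "X \<in> measurable (uniform_measure M E) lborel" using Xm mc by simp
  have gm: "(\<lambda>x. ennreal (g x)) \<in> borel_measurable lborel"
    unfolding g using hm by measurable
  have eq: "distr (uniform_measure M E) lborel X = density lborel (\<lambda>x. ennreal (g x))"
  proof (rule measure_eqI)
    show "sets (distr (uniform_measure M E) lborel X) = sets (density lborel (\<lambda>x. ennreal (g x)))" by simp
  next
    fix A assume "A \<in> sets (distr (uniform_measure M E) lborel X)"
    then have A: "A \<in> sets borel" by simp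
    have XA: "X -` A \<inter> space M \<in> sets M" using Xm A by (rule measurable_sets)
    have "emeasure (distr (uniform_measure M E) lborel X) A = emeasure (uniform_measure M E) (X -` A \<inter> space M)"
      using XU A by (simp add: emeasure_distr)
    also have "\<dots> = emeasure M (E \<inter> (X -` A \<inter> space M)) / emeasure M E"
      using XA E by simp
    also have "E \<inter> (X -` A \<inter> space M) = {\<omega>\<in>space M. X \<omega> \<in> A} \<inter> E" by auto
    also have "emeasure M \<dots> = (\<integral>\<^sup>+x. ennreal (h x) * indicator A x \<partial>lborel)" by (rule key[OF A])
    finally have L: "emeasure (distr (uniform_measure M E) lborel X) A = (\<integral>\<^sup>+x. ennreal (h x) * indicator A x \<partial>lborel) / emeasure M E" .
    have R: "emeasure (density lborel (\<lambda>x. ennreal (g x))) A = (\<integral>\<^sup>+x. ennreal (g x) * indicator A x \<partial>lborel)"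
      using A by (intro emeasure_density gm) simp
    show "emeasure (distr (uniform_measure M E) lborel X) A = emeasure (density lborel (\<lambda>x. ennreal (g x))) A"
    proof (cases "?m = 0")
      case True
      have "(\<integral>\<^sup>+x. ennreal (h x) * indicator A x \<partial>lborel) \<le> emeasure M E"
        unfolding key[OF A, symmetric] using E by (intro emeasure_mono) auto
      then have z: "(\<integral>\<^sup>+x. ennreal (h x) * indicator A x \<partial>lborel) = 0"
        using True by (simp add: emeasure_eq_measure)
      show ?thesis unfolding L R z using True by (simp add: g)
    next
      case False
      then have mp: "0 < ?m" using measure_nonneg[of M E] by linarith
      have "(\<integral>\<^sup>+x. ennreal (g x) * indicator A x \<partial>lborel) = (\<integral>\<^sup>+x. (ennreal (h x) * indicator A x) * ennreal (1 / ?m) \<partial>lborel)"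
        using h0 mp by (intro nn_integral_cong) (simp add: g ennreal_mult[symmetric] divide_inverse mult_ac indicator_def)
      also have "\<dots> = (\<integral>\<^sup>+x. ennreal (h x) * indicator A x \<partial>lborel) * ennreal (1 / ?m)"
        using hm A by (intro nn_integral_multc borel_measurable_times_ennreal borel_measurable_indicator) (auto simp: measurable_cong_sets[OF sets_lborel refl])
      also have "\<dots> = (\<integral>\<^sup>+x. ennreal (h x) * indicator A x \<partial>lborel) / emeasure M E"
        using mp by (simp add: emeasure_eq_measure divide_ennreal_def inverse_ennreal divide_inverse)
      finally show ?thesis unfolding L R by simp
    qed
  qed
  show ?thesis unfolding distributed_def using eq gm XU by simp
qed

lemma outer1:
  assumes lam: "lam1 > 0" "lam2 > 0" and S: "S \<in> sets (borel \<Otimes>\<^sub>M borel)"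
  shows "emeasure (mu lam1 \<Otimes>\<^sub>M mu lam2) S = (\<integral>\<^sup>+x. ennreal (fden lam1 x) * emeasure (mu lam2) (Pair x -` S) \<partial>lborel)"
proof -
  interpret P1: prob_space "mu lam1" by (rule mu_prob[OF lam(1)])
  interpret P2: prob_space "mu lam2" by (rule mu_prob[OF lam(2)])
  interpret pair_prob_space "mu lam1" "mu lam2" ..
  have S': "S \<in> sets (mu lam1 \<Otimes>\<^sub>M mu lam2)" using S by simp
  have "emeasure (mu lam1 \<Otimes>\<^sub>M mu lam2) S = (\<integral>\<^sup>+x. emeasure (mu lam2) (Pair x -` S) \<partial>mu lam1)"
    by (rule P2.emeasure_pair_measure_alt[OF S'])
  also have "\<dots> = (\<integral>\<^sup>+x. ennreal (fden lam1 x) * emeasure (mu lam2) (Pair x -` S) \<partial>lborel)"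
    unfolding mu_def[of lam1]
  proof (rule nn_integral_density)
    show "(\<lambda>x. ennreal (fden lam1 x)) \<in> borel_measurable lborel" by measurable
    have "(\<lambda>x. emeasure (mu lam2) (Pair x -` S)) \<in> borel_measurable (mu lam1)"
      by (rule P2.measurable_emeasure_Pair[OF S'])
    then show "(\<lambda>x. emeasure (mu lam2) (Pair x -` S)) \<in> borel_measurable lborel"
      by (simp add: measurable_cong_sets[OF sets_mu refl])
  qed
  finally show ?thesis .
qed

lemma outer2:
  assumes lam: "lam1 > 0" "lam2 > 0" and S: "S \<in> sets (borel \<Otimes>\<^sub>M borel)"
  shows "emeasure (mu lam1 \<Otimes>\<^sub>M mu lam2) S = (\<integral>\<^sup>+y. ennreal (fden lam2 y) * emeasure (mu lam1) ((\<lambda>x. (x, y)) -` S) \<partial>lborel)"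
proof -
  interpret P1: prob_space "mu lam1" by (rule mu_prob[OF lam(1)])
  interpret P2: prob_space "mu lam2" by (rule mu_prob[OF lam(2)])
  interpret pair_prob_space "mu lam1" "mu lam2" ..
  have S': "S \<in> sets (mu lam1 \<Otimes>\<^sub>M mu lam2)" using S by simp
  have "emeasure (mu lam1 \<Otimes>\<^sub>M mu lam2) S = (\<integral>\<^sup>+y. emeasure (mu lam1) ((\<lambda>x. (x, y)) -` S) \<partial>mu lam2)"
    by (rule emeasure_pair_measure_alt2[OF S'])
  also have "\<dots> = (\<integral>\<^sup>+y. ennreal (fden lam2 y) * emeasure (mu lam1) ((\<lambda>x. (x, y)) -` S) \<partial>lborel)"
    unfolding mu_def[of lam2]
  proof (rule nn_integral_density)
    show "(\<lambda>x. ennreal (fden lam2 x)) \<in> borel_measurable lborel" by measurable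
    have "(\<lambda>y. emeasure (mu lam1) ((\<lambda>x. (x, y)) -` S)) \<in> borel_measurable (mu lam2)"
      by (rule measurable_emeasure_Pair2[OF S'])
    then show "(\<lambda>y. emeasure (mu lam1) ((\<lambda>x. (x, y)) -` S)) \<in> borel_measurable lborel"
      by (simp add: measurable_cong_sets[OF sets_mu refl])
  qed
  finally show ?thesis .
qed

lemma pair_event:
  assumes ppp1: "homogeneous_PPP M lam1 Phi1" and ppp2: "homogeneous_PPP M lam2 Phi2"
    and indep: "indep_PP M Phi1 Phi2" and lam: "lam1 > 0" "lam2 > 0"
    and S: "S \<in> sets (borel \<Otimes>\<^sub>M borel)"
  shows "emeasure M {\<omega>\<in>space M. (nearest_dist (Phi1 \<omega>), nearest_dist (Phi2 \<omega>)) \<in> S} = emeasure (mu lam1 \<Otimes>\<^sub>M mu lam2) S"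
proof -
  have D1m: "(\<lambda>\<omega>. nearest_dist (Phi1 \<omega>)) \<in> borel_measurable M" by (rule nd_meas[OF ppp1])
  have D2m: "(\<lambda>\<omega>. nearest_dist (Phi2 \<omega>)) \<in> borel_measurable M" by (rule nd_meas[OF ppp2])
  have m: "(\<lambda>\<omega>. (nearest_dist (Phi1 \<omega>), nearest_dist (Phi2 \<omega>))) \<in> measurable M (borel \<Otimes>\<^sub>M borel)"
    using D1m D2m by (rule measurable_Pair)
  have "emeasure (mu lam1 \<Otimes>\<^sub>M mu lam2) S = emeasure (distr M (borel \<Otimes>\<^sub>M borel) (\<lambda>\<omega>. (nearest_dist (Phi1 \<omega>), nearest_dist (Phi2 \<omega>)))) S"
    by (simp add: joint_distr[OF ppp1 ppp2 indep lam])
  also have "\<dots> = emeasure M ((\<lambda>\<omega>. (nearest_dist (Phi1 \<omega>), nearest_dist (Phi2 \<omega>))) -` S \<inter> space M)"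
    using m S by (rule emeasure_distr)
  also have "(\<lambda>\<omega>. (nearest_dist (Phi1 \<omega>), nearest_dist (Phi2 \<omega>))) -` S \<inter> space M = {\<omega>\<in>space M. (nearest_dist (Phi1 \<omega>), nearest_dist (Phi2 \<omega>)) \<in> S}"
    by auto
  finally show ?thesis by simp
qed

theorem lemma2:
  fixes M :: "'w measure"
    and Phi1 Phi2 :: "'w \<Rightarrow> (real^2) set"
    and lam1 lam2 P1 P2 a1 a2 B1 B2 :: real
  assumes ppp1: "homogeneous_PPP M lam1 Phi1"
    and ppp2: "homogeneous_PPP M lam2 Phi2"
    and indep: "indep_PP M Phi1 Phi2"
    and pos: "lam1 > 0" "lam2 > 0" "P1 > 0" "P2 > 0" "a1 > 0" "a2 > 0"
    and bias: "B1 > B2" "B2 > 0"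
  defines "E1 \<equiv> {\<omega>\<in>space M. P1 * nearest_dist (Phi1 \<omega>) powr (- a1) \<ge> P2 * B1 * nearest_dist (Phi2 \<omega>) powr (- a2)}"
    and "ED \<equiv> {\<omega>\<in>space M. P2 * B1 * nearest_dist (Phi2 \<omega>) powr (- a2) > P1 * nearest_dist (Phi1 \<omega>) powr (- a1) \<and>
                             P1 * nearest_dist (Phi1 \<omega>) powr (- a1) \<ge> P2 * B2 * nearest_dist (Phi2 \<omega>) powr (- a2)}"
    and "EDb \<equiv> {\<omega>\<in>space M. P2 * B2 * nearest_dist (Phi2 \<omega>) powr (- a2) > P1 * nearest_dist (Phi1 \<omega>) powr (- a1)}"
  shows
    "distributed (uniform_measure M E1) lborel (\<lambda>\<omega>. nearest_dist (Phi1 \<omega>))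
       (\<lambda>x. ennreal (indicator {0<..} x *
          (2 * pi * lam1 / measure M E1 * x *
           exp (- pi * lam1 * x\<^sup>2 - pi * lam2 * (P2 * B1 / P1) powr (2 / a2) * x powr (2 * a1 / a2))))) \<and>
     distributed (uniform_measure M EDb) lborel (\<lambda>\<omega>. nearest_dist (Phi2 \<omega>))
       (\<lambda>x. ennreal (indicator {0<..} x *
          (2 * pi * lam2 / measure M EDb * x *
           exp (- pi * lam1 * (P1 / (P2 * B2)) powr (2 / a1) * x powr (2 * a2 / a1) - pi * lam2 * x\<^sup>2)))) \<and>
     distributed (uniform_measure M ED) lborel (\<lambda>\<omega>. nearest_dist (Phi2 \<omega>))
       (\<lambda>x. ennreal (indicator {0<..} x *
          (2 * pi * lam2 / measure M ED * x *
           (exp (- pi * lam1 * (P1 / (P2 * B1)) powr (2 / a1) * x powr (2 * a2 / a1) - pi * lam2 * x\<^sup>2)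
          - exp (- pi * lam1 * (P1 / (P2 * B2)) powr (2 / a1) * x powr (2 * a2 / a1) - pi * lam2 * x\<^sup>2)))))"
proof -
  interpret prob_space M by (rule ppp_prob[OF ppp1])
  have D1m[measurable]: "(\<lambda>\<omega>. nearest_dist (Phi1 \<omega>)) \<in> borel_measurable M" by (rule nd_meas[OF ppp1])
  have D2m[measurable]: "(\<lambda>\<omega>. nearest_dist (Phi2 \<omega>)) \<in> borel_measurable M" by (rule nd_meas[OF ppp2])
  have E1s: "E1 \<in> sets M" unfolding E1_def by measurable
  have EDs: "ED \<in> sets M" unfolding ED_def by measurable
  have EDbs: "EDb \<in> sets M" unfolding EDb_def by measurable
  note ev = pair_event[OF ppp1 ppp2 indep pos(1,2)]
  have PM: "prob_space M" by (rule ppp_prob[OF ppp1])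

  define h1 where "h1 x = indicator {0<..} x * (2 * pi * lam1 * x *
           exp (- pi * lam1 * x\<^sup>2 - pi * lam2 * (P2 * B1 / P1) powr (2 / a2) * x powr (2 * a1 / a2)))" for x
  define h2 where "h2 x = indicator {0<..} x * (2 * pi * lam2 * x *
           exp (- pi * lam1 * (P1 / (P2 * B2)) powr (2 / a1) * x powr (2 * a2 / a1) - pi * lam2 * x\<^sup>2))" for x
  define h3 where "h3 x = indicator {0<..} x * (2 * pi * lam2 * x *
           (exp (- pi * lam1 * (P1 / (P2 * B1)) powr (2 / a1) * x powr (2 * a2 / a1) - pi * lam2 * x\<^sup>2)
          - exp (- pi * lam1 * (P1 / (P2 * B2)) powr (2 / a1) * x powr (2 * a2 / a1) - pi * lam2 * x\<^sup>2)))" for x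

  have key1: "emeasure M ({\<omega>\<in>space M. nearest_dist (Phi1 \<omega>) \<in> A} \<inter> E1) = (\<integral>\<^sup>+x. ennreal (h1 x) * indicator A x \<partial>lborel)"
    if A: "A \<in> sets borel" for A
  proof -
    define S where "S = {p::real \<times> real. fst p \<in> A \<and> P2 * B1 * snd p powr (- a2) \<le> P1 * fst p powr (- a1)}"
    have "{p \<in> space (borel \<Otimes>\<^sub>M borel). fst p \<in> A \<and> P2 * B1 * snd p powr (- a2) \<le> P1 * (fst p :: real) powr (- a1)} \<in> sets (borel \<Otimes>\<^sub>M borel)"
      using A by measurable
    then have Ss: "S \<in> sets (borel \<Otimes>\<^sub>M borel)" by (simp add: S_def space_pair_measure)
    have "{\<omega>\<in>space M. nearest_dist (Phi1 \<omega>) \<in> A} \<inter> E1 = {\<omega>\<in>space M. (nearest_dist (Phi1 \<omega>), nearest_dist (Phi2 \<omega>)) \<in> S}"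
      by (auto simp: S_def E1_def)
    then have "emeasure M ({\<omega>\<in>space M. nearest_dist (Phi1 \<omega>) \<in> A} \<inter> E1) = emeasure (mu lam1 \<Otimes>\<^sub>M mu lam2) S"
      using ev[OF Ss] by simp
    also have "\<dots> = (\<integral>\<^sup>+x. ennreal (fden lam1 x) * emeasure (mu lam2) (Pair x -` S) \<partial>lborel)"
      by (rule outer1[OF pos(1,2) Ss])
    also have "\<dots> = (\<integral>\<^sup>+x. ennreal (h1 x) * indicator A x \<partial>lborel)"
    proof (rule nn_integral_cong)
      fix x :: real
      show "ennreal (fden lam1 x) * emeasure (mu lam2) (Pair x -` S) = ennreal (h1 x) * indicator A x"
      proof (cases "0 < x")
        case False then show ?thesis by (simp add: fden_def h1_def)
      next
        case True
        define L where "L = P1 * x powr (- a1)"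
        have Lp: "0 < L" using True pos by (simp add: L_def)
        have c: "0 < P2 * B1" using pos bias by simp
        have pre: "Pair x -` S = (if x \<in> A then {y. (P2 * B1) * y powr (- a2) \<le> L} else {})"
          by (auto simp: S_def L_def)
        define e where "e = exp (- (pi * lam2 * ((P2 * B1 / L) powr (1 / a2))\<^sup>2))"
        have em: "emeasure (mu lam2) (Pair x -` S) = indicator A x * ennreal e"
          unfolding pre e_def using inner_ge[OF pos(2) c Lp pos(6)] by (simp add: indicator_def)
        have sq: "((P2 * B1 / L) powr (1 / a2))\<^sup>2 = (P2 * B1 / P1) powr (2 / a2) * x powr (2 * a1 / a2)"
          unfolding L_def using sq_powr[of "P2 * B1" P1 a2 x a1] pos bias True by simp
        have hx: "h1 x = fden lam1 x * e"
        proof -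
          have "- pi * lam1 * x\<^sup>2 - pi * lam2 * (P2 * B1 / P1) powr (2 / a2) * x powr (2 * a1 / a2) =
                - (pi * lam1 * x\<^sup>2) + - (pi * lam2 * ((P2 * B1 / L) powr (1 / a2))\<^sup>2)"
            unfolding sq by simp
          then have ex: "exp (- pi * lam1 * x\<^sup>2 - pi * lam2 * (P2 * B1 / P1) powr (2 / a2) * x powr (2 * a1 / a2)) =
                exp (- (pi * lam1 * x\<^sup>2)) * exp (- (pi * lam2 * ((P2 * B1 / L) powr (1 / a2))\<^sup>2))"
            by (simp only: exp_add)
          show ?thesis unfolding h1_def ex fden_def e_def by (simp add: mult_ac)
        qed
        have f0: "0 \<le> fden lam1 x" using True pos by (simp add: fden_def)
        have e0: "0 \<le> e" by (simp add: e_def)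
        show ?thesis unfolding em hx using f0 e0 by (simp add: ennreal_mult mult_ac)
      qed
    qed
    finally show ?thesis .
  qed

  have key2: "emeasure M ({\<omega>\<in>space M. nearest_dist (Phi2 \<omega>) \<in> A} \<inter> EDb) = (\<integral>\<^sup>+x. ennreal (h2 x) * indicator A x \<partial>lborel)"
    if A: "A \<in> sets borel" for A
  proof -
    define S where "S = {p::real \<times> real. snd p \<in> A \<and> P1 * fst p powr (- a1) < P2 * B2 * snd p powr (- a2)}"
    have "{p \<in> space (borel \<Otimes>\<^sub>M borel). snd p \<in> A \<and> P1 * (fst p :: real) powr (- a1) < P2 * B2 * snd p powr (- a2)} \<in> sets (borel \<Otimes>\<^sub>M borel)"
      using A by measurable
    then have Ss: "S \<in> sets (borel \<Otimes>\<^sub>M borel)" by (simp add: S_def space_pair_measure)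
    have "{\<omega>\<in>space M. nearest_dist (Phi2 \<omega>) \<in> A} \<inter> EDb = {\<omega>\<in>space M. (nearest_dist (Phi1 \<omega>), nearest_dist (Phi2 \<omega>)) \<in> S}"
      by (auto simp: S_def EDb_def)
    then have "emeasure M ({\<omega>\<in>space M. nearest_dist (Phi2 \<omega>) \<in> A} \<inter> EDb) = emeasure (mu lam1 \<Otimes>\<^sub>M mu lam2) S"
      using ev[OF Ss] by simp
    also have "\<dots> = (\<integral>\<^sup>+y. ennreal (fden lam2 y) * emeasure (mu lam1) ((\<lambda>x. (x, y)) -` S) \<partial>lborel)"
      by (rule outer2[OF pos(1,2) Ss])
    also have "\<dots> = (\<integral>\<^sup>+x. ennreal (h2 x) * indicator A x \<partial>lborel)"
    proof (rule nn_integral_cong)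
      fix y :: real
      show "ennreal (fden lam2 y) * emeasure (mu lam1) ((\<lambda>x. (x, y)) -` S) = ennreal (h2 y) * indicator A y"
      proof (cases "0 < y")
        case False then show ?thesis by (simp add: fden_def h2_def)
      next
        case True
        define L where "L = P2 * B2 * y powr (- a2)"
        have Lp: "0 < L" using True pos bias by (simp add: L_def)
        have pre: "(\<lambda>x. (x, y)) -` S = (if y \<in> A then {x. P1 * x powr (- a1) < L} else {})"
          by (auto simp: S_def L_def)
        define e where "e = exp (- (pi * lam1 * ((P1 / L) powr (1 / a1))\<^sup>2))"
        have em: "emeasure (mu lam1) ((\<lambda>x. (x, y)) -` S) = indicator A y * ennreal e"
          unfolding pre e_def using inner_gt[OF pos(1) pos(3) Lp pos(5)] by (simp add: indicator_def)
        have sq: "((P1 / L) powr (1 / a1))\<^sup>2 = (P1 / (P2 * B2)) powr (2 / a1) * y powr (2 * a2 / a1)"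
          unfolding L_def using sq_powr[of P1 "P2 * B2" a1 y a2] pos bias True by simp
        have hx: "h2 y = fden lam2 y * e"
        proof -
          have "- pi * lam1 * (P1 / (P2 * B2)) powr (2 / a1) * y powr (2 * a2 / a1) - pi * lam2 * y\<^sup>2 =
                - (pi * lam2 * y\<^sup>2) + - (pi * lam1 * ((P1 / L) powr (1 / a1))\<^sup>2)"
            unfolding sq by simp
          then have ex: "exp (- pi * lam1 * (P1 / (P2 * B2)) powr (2 / a1) * y powr (2 * a2 / a1) - pi * lam2 * y\<^sup>2) =
                exp (- (pi * lam2 * y\<^sup>2)) * exp (- (pi * lam1 * ((P1 / L) powr (1 / a1))\<^sup>2))"
            by (simp only: exp_add)
          show ?thesis unfolding h2_def ex fden_def e_def by (simp add: mult_ac)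
        qed
        have f0: "0 \<le> fden lam2 y" using True pos by (simp add: fden_def)
        have e0: "0 \<le> e" by (simp add: e_def)
        show ?thesis unfolding em hx using f0 e0 by (simp add: ennreal_mult mult_ac)
      qed
    qed
    finally show ?thesis .
  qed

  have q12: "(P1 / (P2 * B1)) powr (2 / a1) \<le> (P1 / (P2 * B2)) powr (2 / a1)"
    using pos bias by (intro powr_mono2) (auto intro!: divide_left_mono)

  have key3: "emeasure M ({\<omega>\<in>space M. nearest_dist (Phi2 \<omega>) \<in> A} \<inter> ED) = (\<integral>\<^sup>+x. ennreal (h3 x) * indicator A x \<partial>lborel)"
    if A: "A \<in> sets borel" for A
  proof -
    define S where "S = {p::real \<times> real. snd p \<in> A \<and> P1 * fst p powr (- a1) < P2 * B1 * snd p powr (- a2)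
         \<and> P2 * B2 * snd p powr (- a2) \<le> P1 * fst p powr (- a1)}"
    have "{p \<in> space (borel \<Otimes>\<^sub>M borel). snd p \<in> A \<and> P1 * (fst p :: real) powr (- a1) < P2 * B1 * snd p powr (- a2)
         \<and> P2 * B2 * snd p powr (- a2) \<le> P1 * fst p powr (- a1)} \<in> sets (borel \<Otimes>\<^sub>M borel)"
      using A by measurable
    then have Ss: "S \<in> sets (borel \<Otimes>\<^sub>M borel)" by (simp add: S_def space_pair_measure)
    have "{\<omega>\<in>space M. nearest_dist (Phi2 \<omega>) \<in> A} \<inter> ED = {\<omega>\<in>space M. (nearest_dist (Phi1 \<omega>), nearest_dist (Phi2 \<omega>)) \<in> S}"
      by (auto simp: S_def ED_def)
    then have "emeasure M ({\<omega>\<in>space M. nearest_dist (Phi2 \<omega>) \<in> A} \<inter> ED) = emeasure (mu lam1 \<Otimes>\<^sub>M mu lam2) S"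
      using ev[OF Ss] by simp
    also have "\<dots> = (\<integral>\<^sup>+y. ennreal (fden lam2 y) * emeasure (mu lam1) ((\<lambda>x. (x, y)) -` S) \<partial>lborel)"
      by (rule outer2[OF pos(1,2) Ss])
    also have "\<dots> = (\<integral>\<^sup>+x. ennreal (h3 x) * indicator A x \<partial>lborel)"
    proof (rule nn_integral_cong)
      fix y :: real
      show "ennreal (fden lam2 y) * emeasure (mu lam1) ((\<lambda>x. (x, y)) -` S) = ennreal (h3 y) * indicator A y"
      proof (cases "0 < y")
        case False then show ?thesis by (simp add: fden_def h3_def)
      next
        case True
        define L1 where "L1 = P2 * B1 * y powr (- a2)"
        define L2 where "L2 = P2 * B2 * y powr (- a2)"
        have L2p: "0 < L2" using True pos bias by (simp add: L2_def)
        have L12: "L2 < L1" using True pos bias by (simp add: L1_def L2_def)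
        have pre: "(\<lambda>x. (x, y)) -` S = (if y \<in> A then {x. P1 * x powr (- a1) < L1 \<and> L2 \<le> P1 * x powr (- a1)} else {})"
          by (auto simp: S_def L1_def L2_def)
        define e where "e = exp (- (pi * lam1 * ((P1 / L1) powr (1 / a1))\<^sup>2)) - exp (- (pi * lam1 * ((P1 / L2) powr (1 / a1))\<^sup>2))"
        have em: "emeasure (mu lam1) ((\<lambda>x. (x, y)) -` S) = indicator A y * ennreal e"
          unfolding pre e_def using inner_between[OF pos(1) pos(3) L2p L12 pos(5)] by (simp add: indicator_def)
        have sq1: "((P1 / L1) powr (1 / a1))\<^sup>2 = (P1 / (P2 * B1)) powr (2 / a1) * y powr (2 * a2 / a1)"
          unfolding L1_def using sq_powr[of P1 "P2 * B1" a1 y a2] pos bias True by simp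
        have sq2: "((P1 / L2) powr (1 / a1))\<^sup>2 = (P1 / (P2 * B2)) powr (2 / a1) * y powr (2 * a2 / a1)"
          unfolding L2_def using sq_powr[of P1 "P2 * B2" a1 y a2] pos bias True by simp
        have e0: "0 \<le> e"
        proof -
          have "(P1 / (P2 * B1)) powr (2 / a1) * y powr (2 * a2 / a1) \<le> (P1 / (P2 * B2)) powr (2 / a1) * y powr (2 * a2 / a1)"
            using q12 by (intro mult_right_mono) auto
          then show ?thesis unfolding e_def sq1 sq2 using pos by (simp add: mult_left_mono)
        qed
        have hx: "h3 y = fden lam2 y * e"
        proof -
          have a1: "- pi * lam1 * (P1 / (P2 * B1)) powr (2 / a1) * y powr (2 * a2 / a1) - pi * lam2 * y\<^sup>2 =
                - (pi * lam2 * y\<^sup>2) + - (pi * lam1 * ((P1 / L1) powr (1 / a1))\<^sup>2)"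
            unfolding sq1 by simp
          have a2: "- pi * lam1 * (P1 / (P2 * B2)) powr (2 / a1) * y powr (2 * a2 / a1) - pi * lam2 * y\<^sup>2 =
                - (pi * lam2 * y\<^sup>2) + - (pi * lam1 * ((P1 / L2) powr (1 / a1))\<^sup>2)"
            unfolding sq2 by simp
          show ?thesis using True unfolding h3_def fden_def e_def a1 a2 exp_add by (simp add: algebra_simps)
        qed
        have f0: "0 \<le> fden lam2 y" using True pos by (simp add: fden_def)
        show ?thesis unfolding em hx using f0 e0 by (simp add: ennreal_mult mult_ac)
      qed
    qed
    finally show ?thesis .
  qed

  have h1m: "h1 \<in> borel_measurable borel" unfolding h1_def[abs_def] by measurable
  have h2m: "h2 \<in> borel_measurable borel" unfolding h2_def[abs_def] by measurable
  have h3m: "h3 \<in> borel_measurable borel" unfolding h3_def[abs_def] by measurable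
  have h10: "0 \<le> h1 x" for x using pos by (cases "0 < x") (simp_all add: h1_def)
  have h20: "0 \<le> h2 x" for x using pos by (cases "0 < x") (simp_all add: h2_def)
  have h30: "0 \<le> h3 x" for x
  proof (cases "0 < x")
    case True
    have "(P1 / (P2 * B1)) powr (2 / a1) * x powr (2 * a2 / a1) \<le> (P1 / (P2 * B2)) powr (2 / a1) * x powr (2 * a2 / a1)"
      using q12 by (intro mult_right_mono) auto
    then have "exp (- pi * lam1 * (P1 / (P2 * B2)) powr (2 / a1) * x powr (2 * a2 / a1) - pi * lam2 * x\<^sup>2)
       \<le> exp (- pi * lam1 * (P1 / (P2 * B1)) powr (2 / a1) * x powr (2 * a2 / a1) - pi * lam2 * x\<^sup>2)"
      using pos by (simp add: mult_left_mono mult.assoc)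
    then show ?thesis using True pos by (simp add: h3_def)
  qed (simp add: h3_def)

  show ?thesis
  proof (intro conjI)
    show "distributed (uniform_measure M E1) lborel (\<lambda>\<omega>. nearest_dist (Phi1 \<omega>))
       (\<lambda>x. ennreal (indicator {0<..} x *
          (2 * pi * lam1 / measure M E1 * x *
           exp (- pi * lam1 * x\<^sup>2 - pi * lam2 * (P2 * B1 / P1) powr (2 / a2) * x powr (2 * a1 / a2)))))"
    proof (rule distr_uniform[OF PM D1m E1s h1m h10 key1])
      fix x :: real
      show "indicator {0<..} x *
          (2 * pi * lam1 / measure M E1 * x *
           exp (- pi * lam1 * x\<^sup>2 - pi * lam2 * (P2 * B1 / P1) powr (2 / a2) * x powr (2 * a1 / a2))) = h1 x / measure M E1"
        unfolding h1_def by (simp add: divide_inverse mult_ac)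
    qed
    show "distributed (uniform_measure M EDb) lborel (\<lambda>\<omega>. nearest_dist (Phi2 \<omega>))
       (\<lambda>x. ennreal (indicator {0<..} x *
          (2 * pi * lam2 / measure M EDb * x *
           exp (- pi * lam1 * (P1 / (P2 * B2)) powr (2 / a1) * x powr (2 * a2 / a1) - pi * lam2 * x\<^sup>2))))"
    proof (rule distr_uniform[OF PM D2m EDbs h2m h20 key2])
      fix x :: real
      show "indicator {0<..} x *
          (2 * pi * lam2 / measure M EDb * x *
           exp (- pi * lam1 * (P1 / (P2 * B2)) powr (2 / a1) * x powr (2 * a2 / a1) - pi * lam2 * x\<^sup>2)) = h2 x / measure M EDb"
        unfolding h2_def by (simp add: divide_inverse mult_ac)
    qed
    show "distributed (uniform_measure M ED) lborel (\<lambda>\<omega>. nearest_dist (Phi2 \<omega>))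
       (\<lambda>x. ennreal (indicator {0<..} x *
          (2 * pi * lam2 / measure M ED * x *
           (exp (- pi * lam1 * (P1 / (P2 * B1)) powr (2 / a1) * x powr (2 * a2 / a1) - pi * lam2 * x\<^sup>2)
          - exp (- pi * lam1 * (P1 / (P2 * B2)) powr (2 / a1) * x powr (2 * a2 / a1) - pi * lam2 * x\<^sup>2)))))"
    proof (rule distr_uniform[OF PM D2m EDs h3m h30 key3])
      fix x :: real
      show "indicator {0<..} x *
          (2 * pi * lam2 / measure M ED * x *
           (exp (- pi * lam1 * (P1 / (P2 * B1)) powr (2 / a1) * x powr (2 * a2 / a1) - pi * lam2 * x\<^sup>2)
          - exp (- pi * lam1 * (P1 / (P2 * B2)) powr (2 / a1) * x powr (2 * a2 / a1) - pi * lam2 * x\<^sup>2))) = h3 x / measure M ED"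
        unfolding h3_def by (simp add: divide_inverse mult_ac)
    qed
  qed
qed

end
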